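(* Let $p$ be a prime, let $G$ be a cyclic group of order $p$, and let $S$ be an unsplittable minimal zero-sum sequence over $G$. Let $T$ be a subsequence of $S$ with $|\operatorname{supp}(T)|\ge 2$. Then there exists $g\in\operatorname{supp}(T)$ such that $|\Sigma(g^{-1}T)|\ge 2|g^{-1}T|-1$, where $g^{-1}T$ denotes the sequence $T$ with one copy of $g$ removed.
   Context: A sequence over $G$ is a finite unordered list of elements of $G$ with repetition allowed; $|T|$ is the length, $\sigma(T)$ the sum of terms, and $\operatorname{supp}(T)$ the set of elements occurring. $T$ is a subsequence of $S$ if each element occurs in $T$ at most as often as in $S$. $\Sigma(T)$ is the set of sums $\sigma(U)$ over all subsequences $U$ of $T$ with $|U|\ge1$. $S$ is a minimal zero-sum sequence if $\sigma(S)=0$ and no subsequence $U$ with $1\le|U|<|S|$ has $\sigma(U)=0$. A minimal zero-sum sequence $S$ is unsplittable if there do not exist $h\in\operatorname{supp}(S)$ and $y,z\in G$ with $y+z=h$ such that the sequence obtained from $S$ by replacing one copy of $h$ with the two terms $y,z$ is again a minimal zero-sum sequence. *)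

theory Defs
  imports Main "HOL-Library.Multiset" "HOL-Library.Cardinality" "HOL-Computational_Algebra.Primes"
begin

text \<open>Sequences over an abelian group are finite multisets over it.\<close>

definition cyclic_group :: "'a::ab_group_add itself \<Rightarrow> bool" where
  "cyclic_group _ \<longleftrightarrow> (\<exists>g::'a. \<forall>x::'a. \<exists>k::int.
      x = (if k \<ge> 0 then (\<Sum>i<nat k. g) else - (\<Sum>i<nat (- k). g)))"

definition Sigma_set :: "'a::comm_monoid_add multiset \<Rightarrow> 'a set" where
  "Sigma_set T = {sum_mset U | U. U \<subseteq># T \<and> size U \<ge> 1}"

definition minimal_zero_sum :: "'a::comm_monoid_add multiset \<Rightarrow> bool" where
  "minimal_zero_sum S \<longleftrightarrow> sum_mset S = 0 \<and>
     \<not> (\<exists>U. U \<subseteq># S \<and> 1 \<le> size U \<and> size U < size S \<and> sum_mset U = 0)"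

definition unsplittable :: "'a::comm_monoid_add multiset \<Rightarrow> bool" where
  "unsplittable S \<longleftrightarrow> minimal_zero_sum S \<and>
     \<not> (\<exists>h \<in># S. \<exists>y z. y + z = h \<and> minimal_zero_sum (S - {#h#} + {#y, z#}))"

end

theory Submission
  imports Defs
begin


primrec nmul :: "nat \<Rightarrow> 'a::ab_group_add \<Rightarrow> 'a" where
  "nmul 0 x = 0"
| "nmul (Suc n) x = nmul n x + x"

definition pc :: "'a::{ab_group_add,finite} itself \<Rightarrow> bool" where
  "pc t \<longleftrightarrow> prime (CARD('a)) \<and> cyclic_group t"

lemma pc_prime: "pc (TYPE('a::{ab_group_add,finite})) \<Longrightarrow> prime (CARD('a))"
  unfolding pc_def by simp

lemma nmul_add: "nmul (m + n) x = nmul m x + nmul n x"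
  by (induction n) (auto simp: add.assoc)

lemma nmul_mult: "nmul (m * n) x = nmul m (nmul n x)"
  by (induction m) (auto simp: nmul_add add.commute)

lemma nmul_diff_elem: "nmul n (x - y) = nmul n x - nmul n y"
  by (induction n) (auto simp: algebra_simps)

lemma nmul_0: "nmul n (0::'a::ab_group_add) = 0"
  by (induction n) auto

lemma sum_rep: "sum_mset (replicate_mset a x) = nmul a x"
  by (induction a) (auto simp: add.commute)

lemma sum_const_nmul: "(\<Sum>i<n. g) = nmul n g"
  by (induction n) auto

lemma gen_order:
  fixes g :: "'a::{ab_group_add,finite}"
  assumes gen: "\<forall>x::'a. \<exists>k::int. x = (if k \<ge> 0 then (\<Sum>i<nat k. g) else - (\<Sum>i<nat (- k). g))"
  shows "nmul n g = 0 \<longleftrightarrow> CARD('a) dvd n"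
proof -
  let ?p = "CARD('a)"
  have "\<not> inj_on (\<lambda>i. nmul i g) {..?p}"
  proof
    assume "inj_on (\<lambda>i. nmul i g) {..?p}"
    then have "card ((\<lambda>i. nmul i g) ` {..?p}) = Suc ?p" by (simp add: card_image)
    moreover have "card ((\<lambda>i. nmul i g) ` {..?p}) \<le> ?p" by (rule card_mono) auto
    ultimately show False by simp
  qed
  then obtain i j where ij: "i < j" "nmul i g = nmul j g"
    unfolding inj_on_def by (metis linorder_neqE_nat)
  have "nmul j g = nmul (j - i) g + nmul i g" using nmul_add[of "j - i" i g] ij by simp
  then have ex: "0 < j - i \<and> nmul (j - i) g = 0" using ij by simp
  define d where "d = (LEAST d. 0 < d \<and> nmul d g = 0)"
  have d: "0 < d" "nmul d g = 0" unfolding d_def using LeastI[of "\<lambda>d. 0 < d \<and> nmul d g = 0", OF ex] by auto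
  have dmin: "\<And>m. 0 < m \<Longrightarrow> m < d \<Longrightarrow> nmul m g \<noteq> 0"
    unfolding d_def using not_less_Least by blast
  have red: "nmul n g = nmul (n mod d) g" for n
  proof -
    have "n = (n div d) * d + n mod d" by simp
    then have "nmul n g = nmul ((n div d) * d) g + nmul (n mod d) g" by (metis nmul_add)
    moreover have "nmul ((n div d) * d) g = 0" by (simp add: nmul_mult d(2) nmul_0)
    ultimately show ?thesis by simp
  qed
  have sub: "UNIV \<subseteq> (\<lambda>i. nmul i g) ` {..<d}"
  proof
    fix x :: 'a
    obtain k :: int where k: "x = (if k \<ge> 0 then (\<Sum>i<nat k. g) else - (\<Sum>i<nat (- k). g))"
      using gen by blast
    show "x \<in> (\<lambda>i. nmul i g) ` {..<d}"
    proof (cases "k \<ge> 0")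
      case True
      then have "x = nmul (nat k mod d) g" using k red by (simp add: sum_const_nmul)
      then show ?thesis using d(1) by auto
    next
      case False
      let ?m = "nat (- k)"
      have x: "x = - nmul (?m mod d) g" using k red False by (simp add: sum_const_nmul)
      have "nmul (d - ?m mod d) g + nmul (?m mod d) g = nmul d g"
        using nmul_add[of "d - ?m mod d" "?m mod d" g] d(1) by simp
      then have e1: "nmul (d - ?m mod d) g + nmul (?m mod d) g = 0" using d(2) by simp
      have e2: "x + nmul (?m mod d) g = 0" using x by simp
      from e1 e2 have "x = nmul (d - ?m mod d) g" by (metis add_right_cancel)
      then have "x = nmul ((d - ?m mod d) mod d) g" using red by simp
      then show ?thesis using d(1) by auto
    qed
  qed
  have "?p \<le> card ((\<lambda>i. nmul i g) ` {..<d})" using card_mono[OF _ sub] by simp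
  also have "\<dots> \<le> d" using card_image_le[of "{..<d}" "\<lambda>i. nmul i g"] by simp
  finally have pd: "?p \<le> d" .
  have injd: "inj_on (\<lambda>i. nmul i g) {..<d}"
  proof (rule inj_onI, rule ccontr)
    fix i j assume "i \<in> {..<d}" "j \<in> {..<d}" "nmul i g = nmul j g" "i \<noteq> j"
    then have gen2: "\<exists>a b. a < b \<and> b < d \<and> nmul a g = nmul b g"
      by (metis lessThan_iff linorder_neqE_nat)
    then obtain a b where ab: "a < b" "b < d" "nmul a g = nmul b g" by blast
    have "nmul b g = nmul (b - a) g + nmul a g" using nmul_add[of "b - a" a g] ab by simp
    then have "nmul (b - a) g = 0" using ab by simp
    then show False using dmin[of "b - a"] ab by simp
  qed
  have "d = card ((\<lambda>i. nmul i g) ` {..<d})" using card_image[OF injd] by simp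
  also have "\<dots> \<le> ?p" by (rule card_mono) auto
  finally have "d = ?p" using pd by simp
  then show ?thesis
  proof -
    assume dp: "d = ?p"
    show ?thesis
    proof
      assume "nmul n g = 0"
      then have "nmul (n mod d) g = 0" using red by simp
      then have "n mod d = 0" using dmin[of "n mod d"] d(1) by (meson mod_less_divisor neq0_conv)
      then show "?p dvd n" using dp by (simp add: dvd_eq_mod_eq_0)
    next
      assume "?p dvd n"
      then have "n mod d = 0" using dp by simp
      then show "nmul n g = 0" using red[of n] by simp
    qed
  qed
qed

lemma nmul_zero_iff:
  fixes x :: "'a::{ab_group_add,finite}"
  assumes pc: "pc TYPE('a)" and x: "x \<noteq> 0"
  shows "nmul n x = 0 \<longleftrightarrow> CARD('a) dvd n"
proof -
  have p: "prime (CARD('a))" using pc_prime[OF pc] .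
  obtain g :: 'a where gen: "\<forall>x::'a. \<exists>k::int. x = (if k \<ge> 0 then (\<Sum>i<nat k. g) else - (\<Sum>i<nat (- k). g))"
    using pc unfolding pc_def cyclic_group_def by blast
  note go = gen_order[OF gen]
  obtain m where m: "x = nmul m g"
  proof -
    obtain k :: int where k: "x = (if k \<ge> 0 then (\<Sum>i<nat k. g) else - (\<Sum>i<nat (- k). g))"
      using gen by blast
    show ?thesis
    proof (cases "k \<ge> 0")
      case True then show ?thesis using k that by (simp add: sum_const_nmul)
    next
      case False
      let ?m = "nat (- k)"
      have x: "x = - nmul ?m g" using k False by (simp add: sum_const_nmul)
      have "nmul (?m * (CARD('a) - 1)) g + nmul ?m g = nmul (?m * CARD('a)) g"
        using nmul_add[of "?m * (CARD('a) - 1)" ?m g] prime_gt_0_nat[OF p]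
        by (simp add: algebra_simps)
      moreover have "nmul (?m * CARD('a)) g = 0" using go by simp
      ultimately have e1: "nmul (?m * (CARD('a) - 1)) g + nmul ?m g = 0" by simp
      have e2: "x + nmul ?m g = 0" using x by simp
      from e1 e2 have "x = nmul (?m * (CARD('a) - 1)) g" by (metis add_right_cancel)
      then show ?thesis by (rule that)
    qed
  qed
  have nm: "\<not> CARD('a) dvd m" using go m x by simp
  have "nmul n x = nmul (n * m) g" using m by (simp add: nmul_mult)
  then have "nmul n x = 0 \<longleftrightarrow> CARD('a) dvd n * m" using go by simp
  also have "\<dots> \<longleftrightarrow> CARD('a) dvd n" using p nm by (simp add: prime_dvd_mult_iff)
  finally show ?thesis .
qed




lemma nmul_inj:
  fixes x :: "'a::{ab_group_add,finite}"
  assumes p: "pc TYPE('a)" and x: "x \<noteq> 0" and "i < CARD('a)" "j < CARD('a)"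
    and "nmul i x = nmul j x"
  shows "i = j"
proof (rule ccontr)
  assume ne: "i \<noteq> j"
  { fix i j :: nat assume ij: "i < j" "j < CARD('a)" "nmul i x = nmul j x"
    have "nmul j x = nmul (j - i) x + nmul i x" using nmul_add[of "j-i" i x] ij by simp
    then have "nmul (j - i) x = 0" using ij by simp
    then have "CARD('a) dvd (j - i)" using nmul_zero_iff[OF p x] by simp
    then have False using ij by (simp add: nat_dvd_not_less) }
  then show False using assms ne by (metis linorder_neqE_nat)
qed

lemma nmul_surj:
  fixes x :: "'a::{ab_group_add,finite}"
  assumes p: "pc TYPE('a)" and x: "x \<noteq> 0"
  shows "\<exists>t < CARD('a). a = nmul t x"
proof -
  have "inj_on (\<lambda>t. nmul t x) {..<CARD('a)}"
    using nmul_inj[OF p x] by (auto simp: inj_on_def)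
  then have "card ((\<lambda>t. nmul t x) ` {..<CARD('a)}) = CARD('a)"
    by (simp add: card_image)
  then have "(\<lambda>t. nmul t x) ` {..<CARD('a)} = UNIV"
    by (simp add: card_subset_eq)
  then show ?thesis by (metis UNIV_I imageE lessThan_iff)
qed

lemma nmul_card:
  fixes x :: "'a::{ab_group_add,finite}"
  assumes p: "pc TYPE('a)"
  shows "nmul (CARD('a)) x = 0"
proof (cases "x = 0")
  case True
  have "nmul n (0::'a) = 0" for n by (induction n) auto
  then show ?thesis using True by simp
qed (simp add: nmul_zero_iff[OF p])




lemma card_ge2: "prime (CARD('a::finite)) \<Longrightarrow> CARD('a) \<ge> 2"
  using prime_ge_2_nat by blast

lemma nmul_neg:
  fixes w :: "'a::{ab_group_add,finite}"
  assumes p: "pc TYPE('a)"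
  shows "nmul (CARD('a) - 1) w = - w"
proof -
  have e: "Suc (CARD('a) - 1) = CARD('a)" using card_ge2[OF pc_prime[OF p]] by simp
  have "nmul (Suc (CARD('a) - 1)) w = 0" unfolding e by (rule nmul_card[OF p])
  moreover have "nmul (CARD('a) - 1) w + w = nmul (Suc (CARD('a) - 1)) w" by (simp only: nmul.simps)
  ultimately have "nmul (CARD('a) - 1) w + w = 0" by simp
  then show ?thesis by (simp add: eq_neg_iff_add_eq_0)
qed

lemma prog:
  fixes w :: "'a::{ab_group_add,finite}" and X :: "'a set"
  assumes p: "pc TYPE('a)" and w: "w \<noteq> 0" and X0: "0 \<in> X" and Xw: "- w \<notin> X"
    and cardc: "card ((\<lambda>a. w + a) ` X \<union> X) \<le> card X + 1"
  shows "\<exists>M. M + 2 \<le> CARD('a) \<and> X = (\<lambda>j. nmul j w) ` {..M}"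
proof -
  let ?p = "CARD('a)"
  have p2: "?p \<ge> 2" using card_ge2[OF pc_prime[OF p]] .
  define Y where "Y = (\<lambda>a. w + a) ` X - X"
  have un: "(\<lambda>a. w + a) ` X \<union> X = X \<union> Y" unfolding Y_def by blast
  have "card (X \<union> Y) = card X + card Y"
    by (rule card_Un_disjoint) (auto simp: Y_def)
  with cardc un have cY: "card Y \<le> 1" by simp
  define P where "P j = (nmul (Suc j) w \<notin> X)" for j
  have s2: "Suc (?p - 2) = ?p - 1" using p2 by simp
  have Pp: "P (?p - 2)" unfolding P_def s2 using nmul_neg[OF p, of w] Xw by simp
  define M where "M = (LEAST j. P j)"
  have PM: "P M" unfolding M_def by (rule LeastI[of P, OF Pp])
  have Mle: "M \<le> ?p - 2" unfolding M_def by (rule Least_le[of P, OF Pp])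
  have low: "j \<le> M \<Longrightarrow> nmul j w \<in> X" for j
  proof (induction j)
    case 0 then show ?case using X0 by simp
  next
    case (Suc j)
    then have "\<not> P j" unfolding M_def using not_less_Least[of j P] by simp
    then show ?case unfolding P_def by simp
  qed
  have inY: "nmul (Suc M) w \<in> Y"
    unfolding Y_def using PM low[of M] unfolding P_def by (auto simp: add.commute)
  have Yeq: "Y = {nmul (Suc M) w}"
  proof -
    have "finite Y" by simp
    with cY inY show ?thesis using card_le_Suc0_iff_eq[of Y] by auto
  qed
  have high: "X \<subseteq> (\<lambda>j. nmul j w) ` {..M}"
  proof
    fix a assume aX: "a \<in> X"
    obtain t where t: "t < ?p" "a = nmul t w" using nmul_surj[OF p w] by blast
    show "a \<in> (\<lambda>j. nmul j w) ` {..M}"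
    proof (cases "t \<le> M")
      case True then show ?thesis using t by auto
    next
      case False
      have "t + d < ?p \<Longrightarrow> nmul (t + d) w \<in> X" for d
      proof (induction d)
        case 0 then show ?case using aX t by simp
      next
        case (Suc d)
        then have prev: "nmul (t + d) w \<in> X" by simp
        have eq: "nmul (t + Suc d) w = w + nmul (t + d) w" by (simp add: add.commute)
        show ?case
        proof (rule ccontr)
          assume "nmul (t + Suc d) w \<notin> X"
          then have "nmul (t + Suc d) w \<in> Y" unfolding Y_def using prev eq by auto
          then have "nmul (t + Suc d) w = nmul (Suc M) w" using Yeq by simp
          then have "t + Suc d = Suc M" using nmul_inj[OF p w] Suc.prems Mle p2 by simp
          then show False using False by simp
        qed
      qed
      from this[of "?p - 1 - t"] have "nmul (?p - 1) w \<in> X" using t by simp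
      then show ?thesis using Xw nmul_neg[OF p, of w] by simp
    qed
  qed
  have "(\<lambda>j. nmul j w) ` {..M} \<subseteq> X" using low by auto
  with high have "X = (\<lambda>j. nmul j w) ` {..M}" by blast
  then show ?thesis using Mle p2 by (intro exI[of _ M]) auto
qed




definition AS :: "'a::comm_monoid_add multiset \<Rightarrow> 'a set" where
  "AS U = {sum_mset V | V. V \<subseteq># U}"

definition zsf :: "'a::comm_monoid_add multiset \<Rightarrow> bool" where
  "zsf U \<longleftrightarrow> (\<forall>V. V \<subseteq># U \<longrightarrow> V \<noteq> {#} \<longrightarrow> sum_mset V \<noteq> 0)"

definition lafree :: "'a::ab_group_add multiset \<Rightarrow> bool" where
  "lafree U \<longleftrightarrow> (\<forall>y a x. 2 \<le> a \<longrightarrow> y = nmul a x \<longrightarrow> \<not> add_mset y (replicate_mset a x) \<subseteq># U)"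

lemma sub_add_notin:
  assumes "V \<subseteq># add_mset x U" "x \<notin># V" shows "V \<subseteq># U"
  unfolding subseteq_mset_def
proof
  fix e
  have c: "count V e \<le> count (add_mset x U) e" using assms(1) by (simp add: subseteq_mset_def)
  show "count V e \<le> count U e"
  proof (cases "e = x")
    case True then show ?thesis using assms(2) by (simp add: not_in_iff)
  next
    case False then show ?thesis using c by simp
  qed
qed

lemma sub_add_in:
  assumes "V \<subseteq># add_mset x U" "x \<in># V" shows "V - {#x#} \<subseteq># U"
  unfolding subseteq_mset_def
proof
  fix e
  have c: "count V e \<le> count (add_mset x U) e" using assms(1) by (simp add: subseteq_mset_def)
  show "count (V - {#x#}) e \<le> count U e"
  proof (cases "e = x")
    case True then show ?thesis using c by simp
  next
    case False then show ?thesis using c by simp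
  qed
qed

lemma AS_I: "V \<subseteq># U \<Longrightarrow> sum_mset V \<in> AS U"
  unfolding AS_def by blast

lemma AS_mem: "s \<in> AS U \<longleftrightarrow> (\<exists>V. V \<subseteq># U \<and> s = sum_mset V)"
  unfolding AS_def by blast

lemma AS_add: "AS (add_mset x U) = AS U \<union> (\<lambda>a. x + a) ` AS U"
proof (rule Set.set_eqI)
  fix s
  show "s \<in> AS (add_mset x U) \<longleftrightarrow> s \<in> AS U \<union> (\<lambda>a. x + a) ` AS U"
  proof
    assume "s \<in> AS (add_mset x U)"
    then obtain V where V: "V \<subseteq># add_mset x U" "s = sum_mset V" unfolding AS_def by blast
    show "s \<in> AS U \<union> (\<lambda>a. x + a) ` AS U"
    proof (cases "x \<in># V")
      case True
      then obtain V' where V': "V = add_mset x V'" by (metis multi_member_split)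
      then have "s = x + sum_mset V'" using V by simp
      moreover have "V' \<subseteq># U" using V V' by simp
      moreover have "sum_mset V' \<in> AS U" using \<open>V' \<subseteq># U\<close> unfolding AS_def by blast
      ultimately have "s \<in> (\<lambda>a. x + a) ` AS U" by (intro image_eqI[of _ _ "sum_mset V'"])
      then show ?thesis by (rule UnI2)
    next
      case False
      then have "V \<subseteq># U" by (rule sub_add_notin[OF V(1)])
      then have "s \<in> AS U" using V unfolding AS_def by blast
      then show ?thesis by (rule UnI1)
    qed
  next
    assume "s \<in> AS U \<union> (\<lambda>a. x + a) ` AS U"
    then show "s \<in> AS (add_mset x U)"
    proof
      assume "s \<in> AS U"
      then obtain V where V: "V \<subseteq># U" "s = sum_mset V" unfolding AS_def by blast
      have "V \<subseteq># add_mset x U" by (rule subset_mset.order_trans[OF V(1)]) simp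
      then show ?thesis unfolding V(2) by (rule AS_I)
    next
      assume "s \<in> (\<lambda>a. x + a) ` AS U"
      then obtain t where t: "t \<in> AS U" "s = x + t" by blast
      then obtain V where V: "V \<subseteq># U" "t = sum_mset V" unfolding AS_def by blast
      have "add_mset x V \<subseteq># add_mset x U" using V(1) by simp
      moreover have "s = sum_mset (add_mset x V)" using t V by simp
      ultimately show ?thesis using AS_I by metis
    qed
  qed
qed

lemma AS_0: "0 \<in> AS U"
  using AS_I[of "{#}" U] by simp

lemma zsf_sub: assumes "zsf U" "V \<subseteq># U" shows "zsf V"
  unfolding zsf_def
proof (intro allI impI)
  fix W assume "W \<subseteq># V" "W \<noteq> {#}"
  moreover have "W \<subseteq># U" using subset_mset.order_trans[OF \<open>W \<subseteq># V\<close> assms(2)] .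
  ultimately show "sum_mset W \<noteq> 0" using assms(1) unfolding zsf_def by blast
qed

lemma lafree_sub: assumes "lafree U" "V \<subseteq># U" shows "lafree V"
  unfolding lafree_def
proof (intro allI impI notI)
  fix y a x assume h: "2 \<le> a" "y = nmul a x" "add_mset y (replicate_mset a x) \<subseteq># V"
  have "add_mset y (replicate_mset a x) \<subseteq># U" using subset_mset.order_trans[OF h(3) assms(2)] .
  then show False using assms(1) h(1,2) unfolding lafree_def by blast
qed

lemma zsf_neg:
  fixes U :: "'a::ab_group_add multiset"
  assumes z: "zsf (add_mset w U)"
  shows "- w \<notin> AS U"
proof
  assume "- w \<in> AS U"
  then obtain V where V: "V \<subseteq># U" "- w = sum_mset V" unfolding AS_def by blast
  have 1: "add_mset w V \<subseteq># add_mset w U" using V(1) by simp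
  have 2: "sum_mset (add_mset w V) = 0" using V(2)[symmetric] by simp
  have 3: "add_mset w V \<noteq> {#}" by simp
  have "sum_mset (add_mset w V) \<noteq> 0" using z 1 3 unfolding zsf_def by blast
  then show False using 2 by simp
qed

lemma zsf_elem: "zsf U \<Longrightarrow> w \<in># U \<Longrightarrow> w \<noteq> 0"
proof
  assume "zsf U" "w \<in># U" "w = 0"
  then have "{#w#} \<subseteq># U" "{#w#} \<noteq> {#}" "sum_mset {#w#} = 0" by (simp_all add: mset_subset_eq_single)
  then show False using \<open>zsf U\<close> unfolding zsf_def by blast
qed

lemma AS_sym: "a \<in> AS U \<Longrightarrow> sum_mset U - a \<in> AS (U::'a::ab_group_add multiset)"
proof -
  assume "a \<in> AS U"
  then obtain V where V: "V \<subseteq># U" "a = sum_mset V" unfolding AS_def by blast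
  have "sum_mset U = sum_mset (U - V) + sum_mset V"
    using sum_mset.union[of "U - V" V] subset_mset.diff_add[OF V(1)] by simp
  then have "sum_mset U - a = sum_mset (U - V)" using V by simp
  moreover have "U - V \<subseteq># U" by simp
  ultimately show ?thesis unfolding AS_def by blast
qed

lemma refl_lemma:
  fixes w :: "'a::{ab_group_add,finite}"
  assumes nw: "- w \<notin> AS U" and A: "AS U = (\<lambda>j. nmul j w) ` {..M}"
  shows "sum_mset U = nmul M w"
proof -
  have "sum_mset U \<in> AS U" unfolding AS_def by blast
  then obtain j where j: "j \<le> M" "sum_mset U = nmul j w" using A by auto
  show ?thesis
  proof (cases "j < M")
    case True
    then have "nmul (Suc j) w \<in> AS U" unfolding A by (intro image_eqI[of _ _ "Suc j"]) auto
    then have "sum_mset U - nmul (Suc j) w \<in> AS U" by (rule AS_sym)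
    then have "- w \<in> AS U" using j by simp
    then show ?thesis using nw by simp
  qed (use j in simp)
qed

lemma fin_AS: "finite (AS (U::'a::{finite,comm_monoid_add} multiset))" by simp




lemma AS_rep: "AS (replicate_mset k a) = (\<lambda>j. nmul j a) ` {..k}"
proof (induction k)
  case 0 then show ?case using AS_I[of "{#}" "{#}"] unfolding AS_def by auto
next
  case (Suc k)
  have "AS (replicate_mset (Suc k) a) = (\<lambda>j. nmul j a) ` {..k} \<union> (\<lambda>x. a + x) ` (\<lambda>j. nmul j a) ` {..k}"
    using AS_add[of a "replicate_mset k a"] Suc by simp
  also have "\<dots> = (\<lambda>j. nmul j a) ` {..Suc k}"
  proof (rule Set.set_eqI, rule iffI)
    fix s assume "s \<in> (\<lambda>j. nmul j a) ` {..k} \<union> (\<lambda>x. a + x) ` (\<lambda>j. nmul j a) ` {..k}"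
    then show "s \<in> (\<lambda>j. nmul j a) ` {..Suc k}"
    proof
      assume "s \<in> (\<lambda>j. nmul j a) ` {..k}" then show ?thesis by auto
    next
      assume "s \<in> (\<lambda>x. a + x) ` (\<lambda>j. nmul j a) ` {..k}"
      then obtain j where "j \<le> k" "s = a + nmul j a" by blast
      then show ?thesis by (intro image_eqI[of _ _ "Suc j"]) (auto simp: add.commute)
    qed
  next
    fix s assume "s \<in> (\<lambda>j. nmul j a) ` {..Suc k}"
    then obtain j where j: "j \<le> Suc k" "s = nmul j a" by blast
    show "s \<in> (\<lambda>j. nmul j a) ` {..k} \<union> (\<lambda>x. a + x) ` (\<lambda>j. nmul j a) ` {..k}"
    proof (cases j)
      case 0 then show ?thesis using j by (intro UnI1 image_eqI[of _ _ 0]) auto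
    next
      case (Suc j')
      then have "s = a + nmul j' a" "j' \<le> k" using j by (auto simp: add.commute)
      then show ?thesis by blast
    qed
  qed
  finally show ?case .
qed

lemma rep_sub: "m \<le> k \<Longrightarrow> replicate_mset m a \<subseteq># replicate_mset k a"
  by (simp add: subseteq_mset_def)

lemma case1:
  fixes U :: "'a::{ab_group_add,finite} multiset"
  assumes p: "pc TYPE('a)" and z: "zsf U" and l: "lafree U"
    and ab: "a \<noteq> b" and k: "1 \<le> k" and U: "U = add_mset b (replicate_mset k a)"
  shows "2 * size U \<le> card (AS U)"
proof -
  let ?p = "CARD('a)"
  have a0: "a \<noteq> 0" using zsf_elem[OF z] U k by (cases k) auto
  have b0: "b \<noteq> 0" using zsf_elem[OF z] U by auto
  have kp: "k < ?p"
  proof (rule ccontr)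
    assume "\<not> k < ?p"
    then have "replicate_mset ?p a \<subseteq># replicate_mset k a" by (intro rep_sub) simp
    also have "\<dots> \<subseteq># U" using U by simp
    finally have s: "replicate_mset ?p a \<subseteq># U" .
    have "replicate_mset ?p a \<noteq> {#}" using card_ge2[OF pc_prime[OF p]] by (cases "?p") auto
    moreover have "sum_mset (replicate_mset ?p a) = 0" using sum_rep nmul_card[OF p] by metis
    ultimately show False using z s unfolding zsf_def by blast
  qed
  define P where "P = (\<lambda>j. nmul j a) ` {..k}"
  have AU: "AS U = P \<union> (\<lambda>x. b + x) ` P" unfolding U P_def AS_add AS_rep ..
  have injP: "inj_on (\<lambda>j. nmul j a) {..k}"
    using nmul_inj[OF p a0] kp by (auto simp: inj_on_def)
  have cP: "card P = Suc k" unfolding P_def using card_image[OF injP] by simp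
  have cbP: "card ((\<lambda>x. b + x) ` P) = Suc k" using cP by (simp add: card_image)
  have disj: "P \<inter> (\<lambda>x. b + x) ` P = {}"
  proof (rule ccontr)
    assume "P \<inter> (\<lambda>x. b + x) ` P \<noteq> {}"
    then obtain i j where ij: "i \<le> k" "j \<le> k" "nmul j a = b + nmul i a" unfolding P_def by blast
    show False
    proof (cases "i < j")
      case True
      have "nmul j a = nmul (j - i) a + nmul i a" using nmul_add[of "j - i" i a] True by simp
      then have bj: "b = nmul (j - i) a" using ij(3) by simp
      show False
      proof (cases "j - i = 1")
        case True then show False using bj ab by simp
      next
        case False
        then have "2 \<le> j - i" using \<open>i < j\<close> by simp
        moreover have "add_mset b (replicate_mset (j - i) a) \<subseteq># U"
          unfolding U using rep_sub[of "j - i" k a] ij by simp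
        ultimately show False using l bj unfolding lafree_def by blast
      qed
    next
      case False
      have "nmul i a = nmul (i - j) a + nmul j a" using nmul_add[of "i - j" j a] False by simp
      then have "nmul j a = b + nmul (i - j) a + nmul j a" using ij(3) by (simp add: add.assoc)
      then have s0: "sum_mset (add_mset b (replicate_mset (i - j) a)) = 0" by (simp add: sum_rep)
      have "add_mset b (replicate_mset (i - j) a) \<subseteq># U"
        unfolding U using rep_sub[of "i - j" k a] ij by simp
      moreover have "add_mset b (replicate_mset (i - j) a) \<noteq> {#}" by simp
      ultimately show False using z s0 unfolding zsf_def by blast
    qed
  qed
  have "card (AS U) = card P + card ((\<lambda>x. b + x) ` P)"
    unfolding AU by (rule card_Un_disjoint) (use disj in auto)
  then show ?thesis using cP cbP U by simp
qed




lemma set_rem: "set_mset U - {w} \<subseteq> set_mset (U - {#w#})"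
proof
  fix e assume e: "e \<in> set_mset U - {w}"
  then have "w \<noteq> e" by auto
  then have "count (U - {#w#}) e = count U e" by simp
  moreover have "0 < count U e" using e by simp
  ultimately show "e \<in> set_mset (U - {#w#})" by (subst count_greater_zero_iff[symmetric]) simp
qed

lemma card_rem: "card (set_mset U) \<le> Suc (card (set_mset (U - {#w#})))"
proof -
  have "card (set_mset U - {w}) \<le> card (set_mset (U - {#w#}))"
    by (rule card_mono[OF _ set_rem]) simp
  moreover have "card (set_mset U) \<le> Suc (card (set_mset U - {w}))"
    by (cases "card (set_mset U)") (auto simp: card_Diff_singleton_if)
  ultimately show ?thesis by simp
qed

lemma split_cases:
  assumes "2 \<le> card (set_mset U)"
  shows "(\<exists>a b k. a \<noteq> b \<and> 1 \<le> k \<and> U = add_mset b (replicate_mset k a)) \<or>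
         (\<exists>w1 w2. w1 \<noteq> w2 \<and> w1 \<in># U \<and> w2 \<in># U \<and> 2 \<le> card (set_mset (U - {#w1#}))
              \<and> 2 \<le> card (set_mset (U - {#w2#})))"
proof (cases "card (set_mset U) = 2")
  case False
  then have c3: "3 \<le> card (set_mset U)" using assms by simp
  have "\<not> card (set_mset U) \<le> Suc 0" using assms by simp
  then obtain w1 w2 where w: "w1 \<in># U" "w2 \<in># U" "w1 \<noteq> w2"
    using card_le_Suc0_iff_eq[of "set_mset U"] by auto
  have "2 \<le> card (set_mset (U - {#w1#}))" using card_rem[of U w1] c3 by simp
  moreover have "2 \<le> card (set_mset (U - {#w2#}))" using card_rem[of U w2] c3 by simp
  ultimately show ?thesis using w by blast
next
  case True
  then obtain a b where ab: "set_mset U = {a, b}" "a \<noteq> b" by (auto simp: card_2_iff)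
  have mem: "a \<in># U" "b \<in># U" using ab by auto
  then have ca: "1 \<le> count U a" and cb: "1 \<le> count U b" by (simp_all add: Suc_le_eq)
  have other: "count U e = 0" if "e \<noteq> a" "e \<noteq> b" for e
  proof -
    have "e \<notin># U" using ab that by auto
    then show ?thesis by (simp add: count_eq_zero_iff)
  qed
  show ?thesis
  proof (cases "2 \<le> count U a \<and> 2 \<le> count U b")
    case True
    have "{a, b} \<subseteq> set_mset (U - {#a#})" using True ab by (auto simp: in_diff_count)
    then have "card {a, b} \<le> card (set_mset (U - {#a#}))" by (intro card_mono) auto
    then have 1: "2 \<le> card (set_mset (U - {#a#}))" using ab by simp
    have "{a, b} \<subseteq> set_mset (U - {#b#})" using True ab by (auto simp: in_diff_count)
    then have "card {a, b} \<le> card (set_mset (U - {#b#}))" by (intro card_mono) auto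
    then have 2: "2 \<le> card (set_mset (U - {#b#}))" using ab by simp
    show ?thesis by (intro disjI2 exI[of _ a] exI[of _ b] conjI) (simp_all only: ab(2) mem 1 2 not_False_eq_True)
  next
    case False
    then have "count U a = 1 \<or> count U b = 1" using ca cb by linarith
    then show ?thesis
    proof
      assume b1: "count U b = 1"
      have eq: "U = add_mset b (replicate_mset (count U a) a)"
        by (rule multiset_eqI) (use ab b1 other in auto)
      have "a \<noteq> b \<and> 1 \<le> count U a \<and> U = add_mset b (replicate_mset (count U a) a)"
        by (intro conjI ab(2) ca eq)
      then have "\<exists>a b k. a \<noteq> b \<and> 1 \<le> k \<and> U = add_mset b (replicate_mset k a)" by (intro exI)
      then show ?thesis by (rule disjI1)
    next
      assume a1: "count U a = 1"
      have eq: "U = add_mset a (replicate_mset (count U b) b)"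
        by (rule multiset_eqI) (use ab a1 other in auto)
      have ba: "b \<noteq> a" using ab(2) by simp
      have "b \<noteq> a \<and> 1 \<le> count U b \<and> U = add_mset a (replicate_mset (count U b) b)"
        by (intro conjI ba cb eq)
      then have "\<exists>a b k. a \<noteq> b \<and> 1 \<le> k \<and> U = add_mset b (replicate_mset k a)" by (intro exI)
      then show ?thesis by (rule disjI1)
    qed
  qed
qed

lemma bad_step:
  fixes U :: "'a::{ab_group_add,finite} multiset"
  assumes p: "pc TYPE('a)" and z: "zsf U" and w: "w \<in># U"
    and c: "card (AS U) \<le> card (AS (U - {#w#})) + 1"
  shows "\<exists>M. M + 2 \<le> CARD('a) \<and> card (AS U) = M + 2 \<and> sum_mset U = nmul (Suc M) w"
proof -
  define U' where "U' = U - {#w#}"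
  have UU: "U = add_mset w U'" unfolding U'_def using w by simp
  have w0: "w \<noteq> 0" using zsf_elem[OF z w] .
  have nw: "- w \<notin> AS U'" using zsf_neg[of w U'] z UU by simp
  have AU: "AS U = AS U' \<union> (\<lambda>a. w + a) ` AS U'" unfolding UU by (rule AS_add)
  have "card ((\<lambda>a. w + a) ` AS U' \<union> AS U') \<le> card (AS U') + 1"
    using c AU unfolding U'_def by (simp add: Un_commute)
  from prog[OF p w0 AS_0 nw this] obtain M where
    M: "M + 2 \<le> CARD('a)" "AS U' = (\<lambda>j. nmul j w) ` {..M}" by blast
  have sU': "sum_mset U' = nmul M w" by (rule refl_lemma[OF nw M(2)])
  have sU: "sum_mset U = nmul (Suc M) w" using sU' UU by (simp add: add.commute)
  have inj: "inj_on (\<lambda>j. nmul j w) {..Suc M}"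
    using nmul_inj[OF p w0] M(1) by (auto simp: inj_on_def)
  have cU': "card (AS U') = Suc M"
    unfolding M(2) using card_image[OF inj_on_subset[OF inj, of "{..M}"]] by auto
  have new: "nmul (Suc M) w \<notin> AS U'"
  proof
    assume "nmul (Suc M) w \<in> AS U'"
    then obtain j where "j \<le> M" "nmul (Suc M) w = nmul j w" unfolding M(2) by blast
    then have "Suc M = j" using inj_onD[OF inj] by simp
    then show False using \<open>j \<le> M\<close> by simp
  qed
  have "nmul (Suc M) w \<in> AS U" unfolding AU using M(2)
    by (intro UnI2 image_eqI[of _ _ "nmul M w"]) (auto simp: add.commute)
  then have "insert (nmul (Suc M) w) (AS U') \<subseteq> AS U" using AU by blast
  then have "card (insert (nmul (Suc M) w) (AS U')) \<le> card (AS U)" by (rule card_mono[rotated]) simp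
  then have "M + 2 \<le> card (AS U)" using new cU' by simp
  moreover have "card (AS U) \<le> M + 2" using c cU' unfolding U'_def by simp
  ultimately show ?thesis using M(1) sU by (intro exI[of _ M]) simp
qed

lemma ST:
  fixes U :: "'a::{ab_group_add,finite} multiset"
  assumes p: "pc TYPE('a)"
  shows "zsf U \<Longrightarrow> lafree U \<Longrightarrow> 2 \<le> card (set_mset U) \<Longrightarrow> 2 * size U \<le> card (AS U)"
proof (induction "size U" arbitrary: U rule: less_induct)
  case less
  from split_cases[OF less.prems(3)] show ?case
  proof
    assume "\<exists>a b k. a \<noteq> b \<and> 1 \<le> k \<and> U = add_mset b (replicate_mset k a)"
    then obtain a b k where "a \<noteq> b" "1 \<le> k" "U = add_mset b (replicate_mset k a)" by blast
    then show ?thesis using case1[OF p less.prems(1,2)] by blast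
  next
    assume "\<exists>w1 w2. w1 \<noteq> w2 \<and> w1 \<in># U \<and> w2 \<in># U \<and> 2 \<le> card (set_mset (U - {#w1#}))
              \<and> 2 \<le> card (set_mset (U - {#w2#}))"
    then obtain w1 w2 where w: "w1 \<noteq> w2" "w1 \<in># U" "w2 \<in># U"
      "2 \<le> card (set_mset (U - {#w1#}))" "2 \<le> card (set_mset (U - {#w2#}))" by blast
    have IH: "2 * size (U - {#w#}) \<le> card (AS (U - {#w#}))"
      if "w \<in># U" "2 \<le> card (set_mset (U - {#w#}))" for w
    proof (rule less.hyps)
      show "size (U - {#w#}) < size U" using that(1) by (rule size_Diff1_less)
      show "zsf (U - {#w#})" by (rule zsf_sub[OF less.prems(1)]) simp
      show "lafree (U - {#w#})" by (rule lafree_sub[OF less.prems(2)]) simp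
    qed (use that in auto)
    show ?thesis
    proof (rule ccontr)
      assume bad: "\<not> 2 * size U \<le> card (AS U)"
      have sz: "size (U - {#w#}) = size U - 1" if "w \<in># U" for w
        using that by (simp add: size_Diff_singleton)
      obtain U0 where "U = add_mset w1 U0" using w(2) by (metis multi_member_split)
      then have pos: "1 \<le> size U" by simp
      have cw: "card (AS U) \<le> card (AS (U - {#w#})) + 1"
        if "w \<in># U" "2 \<le> card (set_mset (U - {#w#}))" for w
        using IH[OF that] sz[OF that(1)] bad pos by simp
      obtain M1 where M1: "M1 + 2 \<le> CARD('a)" "card (AS U) = M1 + 2" "sum_mset U = nmul (Suc M1) w1"
        using bad_step[OF p less.prems(1) w(2) cw[OF w(2,4)]] by blast
      obtain M2 where M2: "card (AS U) = M2 + 2" "sum_mset U = nmul (Suc M2) w2"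
        using bad_step[OF p less.prems(1) w(3) cw[OF w(3,5)]] by blast
      have "M1 = M2" using M1(2) M2(1) by simp
      then have "nmul (Suc M1) (w1 - w2) = 0" using M1(3) M2(2) by (simp add: nmul_diff_elem)
      moreover have "w1 - w2 \<noteq> 0" using w(1) by simp
      ultimately have "CARD('a) dvd Suc M1" using nmul_zero_iff[OF p] by blast
      then show False using M1(1) by (simp add: nat_dvd_not_less)
    qed
  qed
qed




lemma minS:
  assumes "minimal_zero_sum S" "V \<subseteq># S" "1 \<le> size V" "size V < size S"
  shows "sum_mset V \<noteq> 0"
  using assms unfolding minimal_zero_sum_def by blast

lemma full:
  fixes S :: "'a::ab_group_add multiset"
  assumes u: "unsplittable S" and h: "h \<in># S" and w: "w \<noteq> 0"
  shows "w \<in> AS (S - {#h#})"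
proof (rule ccontr)
  define R where "R = S - {#h#}"
  assume "w \<notin> AS (S - {#h#})"
  then have nw: "w \<notin> AS R" unfolding R_def .
  have m: "minimal_zero_sum S" using u unfolding unsplittable_def by blast
  have S: "S = add_mset h R" unfolding R_def using h by simp
  have "sum_mset S = 0" using m unfolding minimal_zero_sum_def by blast
  then have sR: "sum_mset R = - h" using S by (simp add: eq_neg_iff_add_eq_0 add.commute)
  define y where "y = - w"
  define z where "z = h + w"
  have yz: "y + z = h" unfolding y_def z_def by simp
  have nz: "- z \<notin> AS R"
  proof
    assume "- z \<in> AS R"
    then obtain V where V: "V \<subseteq># R" "- z = sum_mset V" unfolding AS_def by blast
    have "sum_mset R = sum_mset (R - V) + sum_mset V"
      using sum_mset.union[of "R - V" V] subset_mset.diff_add[OF V(1)] by simp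
    then have "sum_mset (R - V) = w" using sR V(2) unfolding z_def by (simp add: algebra_simps)
    moreover have "R - V \<subseteq># R" by simp
    ultimately have "w \<in> AS R" using AS_I by metis
    then show False using nw by simp
  qed
  have S': "S - {#h#} + {#y, z#} = add_mset y (add_mset z R)" unfolding R_def by simp
  have "minimal_zero_sum (add_mset y (add_mset z R))"
    unfolding minimal_zero_sum_def
  proof (intro conjI notI)
    have "sum_mset (add_mset y (add_mset z R)) = (y + z) + sum_mset R" by (simp add: add.assoc)
    then show "sum_mset (add_mset y (add_mset z R)) = 0" using yz sR by simp
  next
    assume "\<exists>U. U \<subseteq># add_mset y (add_mset z R) \<and> 1 \<le> size U \<and>
      size U < size (add_mset y (add_mset z R)) \<and> sum_mset U = 0"
    then obtain U where U: "U \<subseteq># add_mset y (add_mset z R)" "1 \<le> size U"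
      "size U < size R + 2" "sum_mset U = 0" by auto
    have szS: "size S = size R + 1" using S by simp
    show False
    proof (cases "y \<in># U")
      case True
      define U1 where "U1 = U - {#y#}"
      have U1s: "U1 \<subseteq># add_mset z R" unfolding U1_def by (rule sub_add_in[OF U(1) True])
      have UU1: "U = add_mset y U1" unfolding U1_def using True by simp
      have sU1: "sum_mset U1 = w" using U(4) UU1 unfolding y_def by (simp add: add_eq_0_iff)
      show False
      proof (cases "z \<in># U1")
        case True
        define V where "V = U1 - {#z#}"
        have Vs: "V \<subseteq># R" unfolding V_def by (rule sub_add_in[OF U1s True])
        have UV: "U1 = add_mset z V" unfolding V_def using True by simp
        have "h + sum_mset V = 0" using sU1 UV unfolding z_def by (simp add: algebra_simps)
        then have sV: "sum_mset V = - h" by (simp add: eq_neg_iff_add_eq_0 add.commute)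
        have "add_mset h V \<subseteq># S" using Vs S by simp
        moreover have "1 \<le> size (add_mset h V)" by simp
        moreover have "size (add_mset h V) < size S" using U(3) UU1 UV szS by simp
        moreover have "sum_mset (add_mset h V) = 0" using sV by simp
        ultimately show False using minS[OF m] by blast
      next
        case False
        have "U1 \<subseteq># R" by (rule sub_add_notin[OF U1s False])
        then have "w \<in> AS R" using AS_I sU1 by metis
        then show False using nw by simp
      qed
    next
      case False
      have Us: "U \<subseteq># add_mset z R" by (rule sub_add_notin[OF U(1) False])
      show False
      proof (cases "z \<in># U")
        case True
        define V where "V = U - {#z#}"
        have Vs: "V \<subseteq># R" unfolding V_def by (rule sub_add_in[OF Us True])
        have UV: "U = add_mset z V" unfolding V_def using True by simp
        have "sum_mset V = - z" using U(4) UV by (simp add: add_eq_0_iff)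
        then have "- z \<in> AS R" using AS_I Vs by metis
        then show False using nz by simp
      next
        case False
        have UR: "U \<subseteq># R" by (rule sub_add_notin[OF Us False])
        then have "U \<subseteq># S" using S subset_mset.order_trans[OF UR] by simp
        moreover have "size U < size S" using size_mset_mono[OF UR] szS by simp
        ultimately show False using minS[OF m] U(2,4) by blast
      qed
    qed
  qed
  then have "minimal_zero_sum (S - {#h#} + {#y, z#})" unfolding S' .
  then show False using u h yz unfolding unsplittable_def by blast
qed




lemma unspl_lafree:
  fixes S :: "'a::ab_group_add multiset"
  assumes u: "unsplittable S"
  shows "lafree S"
  unfolding lafree_def
proof (intro allI impI notI)
  fix y a x assume a2: "2 \<le> a" and yx: "y = nmul a x" and sub: "add_mset y (replicate_mset a x) \<subseteq># S"
  have m: "minimal_zero_sum S" using u unfolding unsplittable_def by blast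
  have "y \<in># add_mset y (replicate_mset a x)" by simp
  then have yS: "y \<in># S" using mset_subset_eqD[OF sub] by blast
  define R where "R = S - {#y#}"
  have S: "S = add_mset y R" unfolding R_def using yS by simp
  have repR: "replicate_mset a x \<subseteq># R" using sub S by simp
  have szS: "size S = size R + 1" using S by simp
  have aR: "a \<le> count R x" using mset_subset_eq_count[OF repR, of x] by simp
  have RS: "R \<subseteq># S" unfolding R_def by simp
  have szR: "a \<le> size R" using size_mset_mono[OF repR] by simp
  have x0: "x \<noteq> 0"
  proof
    assume "x = 0"
    have "count R x \<noteq> 0" using aR a2 by linarith
    then have "x \<in># R" by (simp add: count_eq_zero_iff)
    then have "{#x#} \<subseteq># S" using S by simp
    moreover have "size {#x#} < size S" using szS szR a2 by simp
    ultimately show False using minS[OF m, of "{#x#}"] \<open>x = 0\<close> by simp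
  qed
  have "- x \<in> AS R" unfolding R_def by (rule full[OF u yS]) (use x0 in simp)
  then obtain Z where Z: "Z \<subseteq># R" "- x = sum_mset Z" unfolding AS_def by blast
  have ZR: "\<And>e. count Z e \<le> count R e" using Z(1) unfolding subseteq_mset_def by blast
  show False
  proof (cases "count Z x < a")
    case True
    have "add_mset x Z \<subseteq># R" unfolding subseteq_mset_def
    proof
      fix e show "count (add_mset x Z) e \<le> count R e"
        using ZR[of e] True aR by (cases "e = x") auto
    qed
    then have "add_mset x Z \<subseteq># S" using subset_mset.order_trans[OF _ RS] by blast
    moreover have "size (add_mset x Z) < size S"
      using size_mset_mono[OF \<open>add_mset x Z \<subseteq># R\<close>] szS by simp
    moreover have "sum_mset (add_mset x Z) = 0" using Z(2)[symmetric] by simp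
    ultimately show False using minS[OF m, of "add_mset x Z"] by simp
  next
    case False
    then have rZ: "replicate_mset a x \<subseteq># Z" unfolding subseteq_mset_def by simp
    define Z1 where "Z1 = Z - replicate_mset a x"
    have sZ: "sum_mset Z = sum_mset Z1 + nmul a x"
      unfolding Z1_def using sum_mset.union[of "Z - replicate_mset a x" "replicate_mset a x"]
        subset_mset.diff_add[OF rZ] sum_rep by simp
    have xZ1: "add_mset x Z1 \<subseteq># R" unfolding subseteq_mset_def
    proof
      fix e show "count (add_mset x Z1) e \<le> count R e"
        using ZR[of e] False a2 unfolding Z1_def by (cases "e = x") auto
    qed
    define W where "W = add_mset y (add_mset x Z1)"
    have "W \<subseteq># S" unfolding W_def using xZ1 S by simp
    moreover have "size W < size S"
    proof -
      have "size (add_mset x Z1) \<le> size R" using size_mset_mono[OF xZ1] .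
      moreover have "size Z1 = size Z - a" unfolding Z1_def using rZ by (simp add: size_Diff_submset)
      moreover have "size Z \<le> size R" using size_mset_mono[OF Z(1)] .
      moreover have "a \<le> size Z" using size_mset_mono[OF rZ] by simp
      ultimately show ?thesis unfolding W_def using szS a2 by simp
    qed
    moreover have "sum_mset W = 0"
    proof -
      have "sum_mset W = y + x + sum_mset Z1" unfolding W_def by (simp add: add.assoc)
      also have "\<dots> = nmul a x + x + (- x - nmul a x)" using sZ Z(2) yx by (simp add: algebra_simps)
      also have "\<dots> = 0" by simp
      finally show ?thesis .
    qed
    ultimately show False using minS[OF m, of W] unfolding W_def by simp
  qed
qed

lemma AS_empty: "AS {#} = {0}"
proof (rule Set.set_eqI)
  fix s show "s \<in> AS {#} \<longleftrightarrow> s \<in> {0}" unfolding AS_def by auto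
qed

lemma pick:
  assumes "2 \<le> card (set_mset T)"
  shows "\<exists>g. g \<in># T \<and> (2 \<le> card (set_mset (T - {#g#})) \<or> size (T - {#g#}) \<le> 1)"
  using split_cases[OF assms]
proof
  assume "\<exists>a b k. a \<noteq> b \<and> 1 \<le> k \<and> T = add_mset b (replicate_mset k a)"
  then obtain a b k where abk: "a \<noteq> b" "1 \<le> k" "T = add_mset b (replicate_mset k a)" by blast
  have aT: "a \<in># T" using abk by (cases k) auto
  have Ta: "T - {#a#} = add_mset b (replicate_mset (k - 1) a)"
    using abk by (cases k) (auto simp: add_mset_commute)
  show ?thesis
  proof (cases "k = 1")
    case True then show ?thesis using aT Ta by (intro exI[of _ a]) simp
  next
    case False
    then have "{a, b} \<subseteq> set_mset (T - {#a#})" unfolding Ta using abk(2) by (cases "k - 1") auto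
    then have "card {a, b} \<le> card (set_mset (T - {#a#}))" by (intro card_mono) auto
    then show ?thesis using aT abk(1) by (intro exI[of _ a]) simp
  qed
next
  assume "\<exists>w1 w2. w1 \<noteq> w2 \<and> w1 \<in># T \<and> w2 \<in># T \<and> 2 \<le> card (set_mset (T - {#w1#})) \<and>
          2 \<le> card (set_mset (T - {#w2#}))"
  then show ?thesis by blast
qed

theorem lemma2p10:
  fixes p :: nat and S T :: "'a::{ab_group_add, finite} multiset"
  assumes "prime p"
    and "CARD('a) = p"
    and "cyclic_group TYPE('a)"
    and "unsplittable S"
    and "T \<subseteq># S"
    and "card (set_mset T) \<ge> 2"
  shows "\<exists>g \<in># T. int (card (Sigma_set (T - {#g#}))) \<ge> 2 * int (size (T - {#g#})) - 1"
proof -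
  have p: "pc TYPE('a)" unfolding pc_def using assms(1,2,3) by simp
  have m: "minimal_zero_sum S" using assms(4) unfolding unsplittable_def by blast
  obtain g where g: "g \<in># T" "2 \<le> card (set_mset (T - {#g#})) \<or> size (T - {#g#}) \<le> 1"
    using pick[OF assms(6)] by blast
  define U where "U = T - {#g#}"
  have gS: "g \<in># S" using g(1) assms(5) by (meson mset_subset_eqD)
  have US: "U \<subseteq># S" unfolding U_def using assms(5) subset_mset.order_trans[of "T - {#g#}" T S] by simp
  have TS: "\<And>e. count T e \<le> count S e" using assms(5) by (simp add: subseteq_mset_def)
  have "U \<subseteq># S - {#g#}" unfolding U_def subseteq_mset_def
  proof
    fix e show "count (T - {#g#}) e \<le> count (S - {#g#}) e" using TS[of e] by simp
  qed
  then have szU: "size U < size S"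
    using size_mset_mono[OF \<open>U \<subseteq># S - {#g#}\<close>] size_Diff1_less[OF gS] by simp
  have z: "zsf U" unfolding zsf_def
  proof (intro allI impI)
    fix V assume V: "V \<subseteq># U" "V \<noteq> {#}"
    have "V \<subseteq># S" using subset_mset.order_trans[OF V(1) US] .
    moreover have "1 \<le> size V" using V(2) by (simp add: Suc_le_eq nonempty_has_size)
    moreover have "size V < size S" using size_mset_mono[OF V(1)] szU by simp
    ultimately show "sum_mset V \<noteq> 0" using minS[OF m] by blast
  qed
  have l: "lafree U" by (rule lafree_sub[OF unspl_lafree[OF assms(4)] US])
  have cA: "2 * size U \<le> card (AS U)"
  proof (cases "2 \<le> card (set_mset U)")
    case True then show ?thesis using ST[OF p z l] by simp
  next
    case False
    then have "size U \<le> 1" using g(2) unfolding U_def by simp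
    then show ?thesis
    proof (cases "size U")
      case 0 then show ?thesis by simp
    next
      case (Suc n)
      then have "n = 0" using \<open>size U \<le> 1\<close> by simp
      then have "size U = 1" using Suc by simp
      then obtain u where u: "U = {#u#}" using size_1_singleton_mset by blast
      have u0: "u \<noteq> 0" using zsf_elem[OF z] u by simp
      have "AS U = {0, u}" unfolding u using AS_add[of u "{#}"] AS_empty by auto
      then show ?thesis using u u0 by simp
    qed
  qed
  have Sig: "Sigma_set U = AS U - {0}"
  proof (rule Set.set_eqI)
    fix s
    show "s \<in> Sigma_set U \<longleftrightarrow> s \<in> AS U - {0}"
    proof
      assume "s \<in> Sigma_set U"
      then obtain V where V: "s = sum_mset V" "V \<subseteq># U" "1 \<le> size V" unfolding Sigma_set_def by blast
      have "V \<noteq> {#}" using V(3) by auto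
      then have "sum_mset V \<noteq> 0" using z V(2) unfolding zsf_def by blast
      then have "s \<noteq> 0" using V(1) by simp
      moreover have "s \<in> AS U" using V AS_I by metis
      ultimately show "s \<in> AS U - {0}" by simp
    next
      assume s: "s \<in> AS U - {0}"
      then obtain V where V: "V \<subseteq># U" "s = sum_mset V" unfolding AS_def by blast
      have "V \<noteq> {#}" using s V by auto
      then have "1 \<le> size V" by (simp add: Suc_le_eq nonempty_has_size)
      then show "s \<in> Sigma_set U" using V unfolding Sigma_set_def by blast
    qed
  qed
  have "card (Sigma_set U) = card (AS U) - 1" unfolding Sig using AS_0[of U] by simp
  moreover have "AS U \<noteq> {}" using AS_0[of U] by blast
  then have "1 \<le> card (AS U)" by (simp add: Suc_le_eq card_gt_0_iff)
  ultimately have "int (card (Sigma_set U)) \<ge> 2 * int (size U) - 1" using cA by linarith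
  then show ?thesis using g(1) unfolding U_def by blast
qed


end
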